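(* Let $\succcurlyeq$ be a preference relation on the set $\mathcal{B}$ of bets over a propositional language $\mathcal{L}$. The following are equivalent: (1) $\succcurlyeq$ satisfies Non-Triviality, Objective Expected Utility and Implication; (2) $\succcurlyeq$ is represented by a subjective model of uncertainty $(\Omega,t,\lambda)$ with $\lambda$ additive and $t$ monotone; (3) $\succcurlyeq$ is represented by a subjective model of uncertainty $(\Omega',t',\lambda')$ with $\lambda'$ monotone and $t'$ sound.
   Context: Let $\mathbb{P}$ be a set of propositional variables containing distinguished $\mathbf{T}$, $\mathbf{F}$, and $\mathcal{L}$ the language generated by $\neg,\land,\lor$. Write $\phi\implies\psi$ if $\psi$ is deducible from $\phi$ in classical propositional logic, and $\phi\iff\psi$ for mutual deducibility. A bet is a finitely supported $b:\mathcal{L}\to[0,1]$ summing to $1$; $b_\phi$ is the point-mass bet on $\phi$; the set $\mathcal{B}$ of bets is a mixture space under pointwise mixtures and $\succcurlyeq$ is a relation on it. A truth valuation on $\Omega$ is $t:\mathcal{L}\to2^\Omega$ with $t(\mathbf{T})=\Omega,t(\mathbf{F})=\emptyset$; exact: $\phi\iff\psi\Rightarrow t(\phi)=t(\psi)$; monotone: $\phi\implies\psi\Rightarrow t(\phi)\subseteq t(\psi)$; symmetric: $t(\neg\phi)=\Omega\setminus t(\phi)$; $\land$-distributive: $t(\phi\land\psi)=t(\phi)\cap t(\psi)$; sound: all four. A likelihood appraisal on a field $\Sigma\subseteq 2^\Omega$ is $\lambda:\Sigma\to[0,1]$ with $\lambda(\emptyset)=0,\lambda(\Omega)=1$; monotone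 if $A\subseteq B$ implies $\lambda(A)\le\lambda(B)$; additive if finitely additive. A subjective model $(\Omega,t,\lambda)$ ($\lambda$ on a field containing $t(\mathcal{L})$) represents $\succcurlyeq$ if $b\succcurlyeq b'\iff\sum_\phi b(\phi)\lambda(t(\phi))\ge\sum_\phi b'(\phi)\lambda(t(\phi))$. Non-Triviality: $b_{\mathbf{T}}\succcurlyeq b_\phi\succcurlyeq b_{\mathbf{F}}$ for all $\phi$ and $b_{\mathbf{T}}\succ b_{\mathbf{F}}$. Objective Expected Utility: $\succcurlyeq$ is complete, transitive, Archimedean and satisfies Independence. Implication: if $\phi\implies\psi$ then $b_\psi\succcurlyeq b_\phi$. *)

theory Defs
  imports "HOL-Analysis.Analysis"
begin

datatype 'p form = Var 'p | Neg "'p form" | Conj "'p form" "'p form" | Disj "'p form" "'p form"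

fun eval :: "('p \<Rightarrow> bool) \<Rightarrow> 'p form \<Rightarrow> bool" where
  "eval v (Var p) = v p"
| "eval v (Neg a) = (\<not> eval v a)"
| "eval v (Conj a b) = (eval v a \<and> eval v b)"
| "eval v (Disj a b) = (eval v a \<or> eval v b)"

text \<open>Classical deducibility (via completeness: semantic consequence), where the distinguished
  variables Tv and Fv are the truth constants true and false.\<close>
definition entails :: "'p \<Rightarrow> 'p \<Rightarrow> 'p form \<Rightarrow> 'p form \<Rightarrow> bool" where
  "entails Tv Fv a b \<longleftrightarrow> (\<forall>v. v Tv \<and> \<not> v Fv \<longrightarrow> eval v a \<longrightarrow> eval v b)"

definition equiv_form :: "'p \<Rightarrow> 'p \<Rightarrow> 'p form \<Rightarrow> 'p form \<Rightarrow> bool" where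
  "equiv_form Tv Fv a b \<longleftrightarrow> entails Tv Fv a b \<and> entails Tv Fv b a"

definition supp :: "('p form \<Rightarrow> real) \<Rightarrow> 'p form set" where
  "supp b = {a. b a \<noteq> 0}"

definition bet :: "('p form \<Rightarrow> real) \<Rightarrow> bool" where
  "bet b \<longleftrightarrow> (\<forall>a. 0 \<le> b a \<and> b a \<le> 1) \<and> finite (supp b) \<and> (\<Sum>a\<in>supp b. b a) = 1"

definition point_bet :: "'p form \<Rightarrow> ('p form \<Rightarrow> real)" where
  "point_bet a = (\<lambda>c. if c = a then 1 else 0)"

definition mix :: "real \<Rightarrow> ('p form \<Rightarrow> real) \<Rightarrow> ('p form \<Rightarrow> real) \<Rightarrow> ('p form \<Rightarrow> real)" where
  "mix \<alpha> b b' = (\<lambda>a. \<alpha> * b a + (1 - \<alpha>) * b' a)"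

type_synonym 'p pref = "('p form \<Rightarrow> real) \<Rightarrow> ('p form \<Rightarrow> real) \<Rightarrow> bool"

definition strict :: "'p pref \<Rightarrow> ('p form \<Rightarrow> real) \<Rightarrow> ('p form \<Rightarrow> real) \<Rightarrow> bool" where
  "strict R b b' \<longleftrightarrow> R b b' \<and> \<not> R b' b"

definition non_triviality :: "'p \<Rightarrow> 'p \<Rightarrow> 'p pref \<Rightarrow> bool" where
  "non_triviality Tv Fv R \<longleftrightarrow>
     (\<forall>a. R (point_bet (Var Tv)) (point_bet a) \<and> R (point_bet a) (point_bet (Var Fv)))
     \<and> strict R (point_bet (Var Tv)) (point_bet (Var Fv))"

definition complete_pref :: "'p pref \<Rightarrow> bool" where
  "complete_pref R \<longleftrightarrow> (\<forall>b b'. bet b \<longrightarrow> bet b' \<longrightarrow> R b b' \<or> R b' b)"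

definition transitive_pref :: "'p pref \<Rightarrow> bool" where
  "transitive_pref R \<longleftrightarrow> (\<forall>b b' b''. bet b \<longrightarrow> bet b' \<longrightarrow> bet b'' \<longrightarrow>
      R b b' \<longrightarrow> R b' b'' \<longrightarrow> R b b'')"

definition archimedean_pref :: "'p pref \<Rightarrow> bool" where
  "archimedean_pref R \<longleftrightarrow> (\<forall>b b' b''. bet b \<longrightarrow> bet b' \<longrightarrow> bet b'' \<longrightarrow>
      strict R b b' \<longrightarrow> strict R b' b'' \<longrightarrow>
      (\<exists>\<alpha> \<beta>. 0 < \<alpha> \<and> \<alpha> < 1 \<and> 0 < \<beta> \<and> \<beta> < 1 \<and>
         strict R (mix \<alpha> b b'') b' \<and> strict R b' (mix \<beta> b b'')))"

definition independence_pref :: "'p pref \<Rightarrow> bool" where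
  "independence_pref R \<longleftrightarrow> (\<forall>b b' b'' \<alpha>. bet b \<longrightarrow> bet b' \<longrightarrow> bet b'' \<longrightarrow>
      0 < \<alpha> \<longrightarrow> \<alpha> < 1 \<longrightarrow> (R b b' \<longleftrightarrow> R (mix \<alpha> b b'') (mix \<alpha> b' b'')))"

definition objective_EU :: "'p pref \<Rightarrow> bool" where
  "objective_EU R \<longleftrightarrow> complete_pref R \<and> transitive_pref R \<and> archimedean_pref R \<and> independence_pref R"

definition implication_axiom :: "'p \<Rightarrow> 'p \<Rightarrow> 'p pref \<Rightarrow> bool" where
  "implication_axiom Tv Fv R \<longleftrightarrow> (\<forall>a c. entails Tv Fv a c \<longrightarrow> R (point_bet c) (point_bet a))"

definition truth_valuation :: "'p \<Rightarrow> 'p \<Rightarrow> 'w set \<Rightarrow> ('p form \<Rightarrow> 'w set) \<Rightarrow> bool" where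
  "truth_valuation Tv Fv \<Omega> t \<longleftrightarrow> (\<forall>a. t a \<subseteq> \<Omega>) \<and> t (Var Tv) = \<Omega> \<and> t (Var Fv) = {}"

definition exact_tv :: "'p \<Rightarrow> 'p \<Rightarrow> ('p form \<Rightarrow> 'w set) \<Rightarrow> bool" where
  "exact_tv Tv Fv t \<longleftrightarrow> (\<forall>a c. equiv_form Tv Fv a c \<longrightarrow> t a = t c)"

definition monotone_tv :: "'p \<Rightarrow> 'p \<Rightarrow> ('p form \<Rightarrow> 'w set) \<Rightarrow> bool" where
  "monotone_tv Tv Fv t \<longleftrightarrow> (\<forall>a c. entails Tv Fv a c \<longrightarrow> t a \<subseteq> t c)"

definition symmetric_tv :: "'w set \<Rightarrow> ('p form \<Rightarrow> 'w set) \<Rightarrow> bool" where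
  "symmetric_tv \<Omega> t \<longleftrightarrow> (\<forall>a. t (Neg a) = \<Omega> - t a)"

definition conj_distributive_tv :: "('p form \<Rightarrow> 'w set) \<Rightarrow> bool" where
  "conj_distributive_tv t \<longleftrightarrow> (\<forall>a c. t (Conj a c) = t a \<inter> t c)"

definition sound_tv :: "'p \<Rightarrow> 'p \<Rightarrow> 'w set \<Rightarrow> ('p form \<Rightarrow> 'w set) \<Rightarrow> bool" where
  "sound_tv Tv Fv \<Omega> t \<longleftrightarrow> exact_tv Tv Fv t \<and> monotone_tv Tv Fv t \<and> symmetric_tv \<Omega> t \<and> conj_distributive_tv t"

definition likelihood_appraisal :: "'w set \<Rightarrow> 'w set set \<Rightarrow> ('w set \<Rightarrow> real) \<Rightarrow> bool" where
  "likelihood_appraisal \<Omega> \<Sigma> lam \<longleftrightarrow> algebra \<Omega> \<Sigma> \<and> (\<forall>A\<in>\<Sigma>. 0 \<le> lam A \<and> lam A \<le> 1)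
     \<and> lam {} = 0 \<and> lam \<Omega> = 1"

definition monotone_la :: "'w set set \<Rightarrow> ('w set \<Rightarrow> real) \<Rightarrow> bool" where
  "monotone_la \<Sigma> lam \<longleftrightarrow> (\<forall>A\<in>\<Sigma>. \<forall>B\<in>\<Sigma>. A \<subseteq> B \<longrightarrow> lam A \<le> lam B)"

definition additive_la :: "'w set set \<Rightarrow> ('w set \<Rightarrow> real) \<Rightarrow> bool" where
  "additive_la \<Sigma> lam \<longleftrightarrow> (\<forall>A\<in>\<Sigma>. \<forall>B\<in>\<Sigma>. A \<inter> B = {} \<longrightarrow> lam (A \<union> B) = lam A + lam B)"

definition subjective_model ::
  "'p \<Rightarrow> 'p \<Rightarrow> 'w set \<Rightarrow> ('p form \<Rightarrow> 'w set) \<Rightarrow> 'w set set \<Rightarrow> ('w set \<Rightarrow> real) \<Rightarrow> bool" where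
  "subjective_model Tv Fv \<Omega> t \<Sigma> lam \<longleftrightarrow>
     truth_valuation Tv Fv \<Omega> t \<and> likelihood_appraisal \<Omega> \<Sigma> lam \<and> range t \<subseteq> \<Sigma>"

definition expected :: "('p form \<Rightarrow> real) \<Rightarrow> ('p form \<Rightarrow> real) \<Rightarrow> real" where
  "expected u b = (\<Sum>a\<in>supp b. b a * u a)"

definition represents :: "'p pref \<Rightarrow> ('p form \<Rightarrow> 'w set) \<Rightarrow> ('w set \<Rightarrow> real) \<Rightarrow> bool" where
  "represents R t lam \<longleftrightarrow> (\<forall>b b'. bet b \<longrightarrow> bet b' \<longrightarrow>
      (R b b' \<longleftrightarrow> expected (\<lambda>a. lam (t a)) b \<ge> expected (\<lambda>a. lam (t a)) b'))"

end

theory Submission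
  imports Defs
begin


lemma supp_point: "supp (point_bet a) = {a}"
  by (auto simp: supp_def point_bet_def)

lemma bet_point: "bet (point_bet a)"
  unfolding bet_def supp_point by (simp add: point_bet_def)

lemma expected_point: "expected u (point_bet a) = u a"
  unfolding expected_def supp_point by (simp add: point_bet_def)

lemma expected_superset:
  assumes "finite S" "supp b \<subseteq> S"
  shows "expected u b = (\<Sum>a\<in>S. b a * u a)"
  unfolding expected_def
  by (rule sum.mono_neutral_left) (use assms in \<open>auto simp: supp_def\<close>)

lemma bet_sum_superset:
  assumes "bet b" "finite S" "supp b \<subseteq> S"
  shows "(\<Sum>a\<in>S. b a) = 1"
proof -
  have "(\<Sum>a\<in>supp b. b a) = (\<Sum>a\<in>S. b a)"
    by (rule sum.mono_neutral_left) (use assms in \<open>auto simp: supp_def\<close>)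
  then show ?thesis using assms by (simp add: bet_def)
qed

lemma supp_mix: "supp (mix \<alpha> x y) \<subseteq> supp x \<union> supp y"
  by (auto simp: supp_def mix_def)

lemma bet_mix:
  assumes "bet x" "bet y" "0 \<le> \<alpha>" "\<alpha> \<le> 1"
  shows "bet (mix \<alpha> x y)"
proof -
  have fx: "finite (supp x)" and fy: "finite (supp y)" using assms by (auto simp: bet_def)
  let ?S = "supp x \<union> supp y"
  have fin: "finite (supp (mix \<alpha> x y))" using fx fy supp_mix by (metis finite_Un finite_subset)
  have "(\<Sum>a\<in>supp (mix \<alpha> x y). mix \<alpha> x y a) = (\<Sum>a\<in>?S. mix \<alpha> x y a)"
    by (rule sum.mono_neutral_left) (use fx fy in \<open>auto simp: supp_def mix_def\<close>)
  also have "\<dots> = \<alpha> * (\<Sum>a\<in>?S. x a) + (1 - \<alpha>) * (\<Sum>a\<in>?S. y a)"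
    by (simp add: mix_def sum.distrib sum_distrib_left)
  also have "\<dots> = 1"
    using bet_sum_superset[OF assms(1)] bet_sum_superset[OF assms(2)] fx fy by simp
  finally have s: "(\<Sum>a\<in>supp (mix \<alpha> x y). mix \<alpha> x y a) = 1" .
  have r: "0 \<le> mix \<alpha> x y a \<and> mix \<alpha> x y a \<le> 1" for a
  proof -
    have "0 \<le> x a" "x a \<le> 1" "0 \<le> y a" "y a \<le> 1" using assms by (auto simp: bet_def)
    then show ?thesis using assms(3,4) unfolding mix_def
      by (auto intro: convex_bound_le)
  qed
  show ?thesis using fin s r by (simp add: bet_def)
qed

lemma expected_mix:
  assumes "bet x" "bet y"
  shows "expected u (mix \<alpha> x y) = \<alpha> * expected u x + (1 - \<alpha>) * expected u y"
proof -
  have fx: "finite (supp x)" and fy: "finite (supp y)" using assms by (auto simp: bet_def)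
  let ?S = "supp x \<union> supp y"
  have "expected u (mix \<alpha> x y) = (\<Sum>a\<in>?S. mix \<alpha> x y a * u a)"
    using fx fy supp_mix by (intro expected_superset) auto
  also have "\<dots> = \<alpha> * (\<Sum>a\<in>?S. x a * u a) + (1 - \<alpha>) * (\<Sum>a\<in>?S. y a * u a)"
    unfolding sum_distrib_left sum.distrib[symmetric] by (rule sum.cong) (auto simp: mix_def algebra_simps)
  also have "\<dots> = \<alpha> * expected u x + (1 - \<alpha>) * expected u y"
    using fx fy by (simp add: expected_superset[symmetric])
  finally show ?thesis .
qed

lemma mix_same: "mix \<alpha> x x = x" by (simp add: mix_def fun_eq_iff algebra_simps)
lemma mix_swap: "mix \<alpha> x y = mix (1 - \<alpha>) y x" by (simp add: mix_def fun_eq_iff algebra_simps)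
lemma mix_1: "mix 1 x y = x" by (simp add: mix_def)
lemma mix_0: "mix 0 x y = y" by (simp add: mix_def)
lemma mix_mix: "mix p (mix \<alpha> x y) (mix \<beta> x y) = mix (p * \<alpha> + (1 - p) * \<beta>) x y"
  by (simp add: mix_def fun_eq_iff algebra_simps)

lemma suffU:
  fixes R :: "'p pref" and U :: "'p form \<Rightarrow> real"
  assumes rep: "\<And>b b'. bet b \<Longrightarrow> bet b' \<Longrightarrow> R b b' \<longleftrightarrow> expected U b' \<le> expected U b"
  and T: "U (Var Tv) = 1" and F: "U (Var Fv) = 0" and rng: "\<And>a. 0 \<le> U a \<and> U a \<le> 1"
  and mono: "\<And>a c. entails Tv Fv a c \<Longrightarrow> U a \<le> U c"
  shows "non_triviality Tv Fv R \<and> objective_EU R \<and> implication_axiom Tv Fv R"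
proof -
  have nt: "non_triviality Tv Fv R"
    unfolding non_triviality_def strict_def
    using rep[OF bet_point bet_point] rng T F by (simp add: expected_point)
  have imp: "implication_axiom Tv Fv R"
    unfolding implication_axiom_def
    using rep[OF bet_point bet_point] mono by (simp add: expected_point)
  have cpl: "complete_pref R" unfolding complete_pref_def using rep by auto
  have trn: "transitive_pref R" unfolding transitive_pref_def using rep by (meson order_trans)
  have ind: "independence_pref R" unfolding independence_pref_def
  proof (intro allI impI)
    fix b b' b'' :: "'p form \<Rightarrow> real" and \<alpha> :: real
    assume h: "bet b" "bet b'" "bet b''" "0 < \<alpha>" "\<alpha> < 1"
    have "R (mix \<alpha> b b'') (mix \<alpha> b' b'') \<longleftrightarrow>
       \<alpha> * expected U b' + (1 - \<alpha>) * expected U b'' \<le> \<alpha> * expected U b + (1 - \<alpha>) * expected U b''"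
      using rep[OF bet_mix bet_mix] h by (simp add: expected_mix)
    also have "\<dots> \<longleftrightarrow> expected U b' \<le> expected U b" using h by simp
    finally show "R b b' \<longleftrightarrow> R (mix \<alpha> b b'') (mix \<alpha> b' b'')" using rep h by simp
  qed
  have arch: "archimedean_pref R" unfolding archimedean_pref_def
  proof (intro allI impI)
    fix x y z :: "'p form \<Rightarrow> real"
    assume h: "bet x" "bet y" "bet z" "strict R x y" "strict R y z"
    define ex where "ex = expected U x"
    define ey where "ey = expected U y"
    define ez where "ez = expected U z"
    have lt: "ey < ex" "ez < ey" using h rep unfolding strict_def ex_def ey_def ez_def by auto
    define d where "d = ex - ez"
    define r where "r = (ey - ez) / d"
    have dpos: "d > 0" using lt d_def by simp
    have rd: "r * d = ey - ez" using dpos r_def by simp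
    have r01: "0 < r" "r < 1" using lt dpos unfolding r_def d_def by (auto simp: field_simps)
    define \<alpha> where "\<alpha> = (1 + r) / 2"
    define \<beta> where "\<beta> = r / 2"
    have em: "expected U (mix \<gamma> x z) = ez + \<gamma> * d" for \<gamma>
      using expected_mix[OF h(1,3)] unfolding ex_def ez_def d_def by (simp add: algebra_simps)
    have p1: "(1 - r) * d > 0" "r * d > 0" using r01 dpos by simp_all
    have q1: "\<alpha> * d - r * d = (1 - r) * d / 2" unfolding \<alpha>_def by (simp add: field_simps)
    have q2: "r * d - \<beta> * d = r * d / 2" unfolding \<beta>_def by (simp add: field_simps)
    have ea: "expected U (mix \<alpha> x z) > ey" using em[of \<alpha>] rd p1 q1 by linarith
    have eb: "expected U (mix \<beta> x z) < ey" using em[of \<beta>] rd p1 q2 by linarith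
    have a01: "0 < \<alpha>" "\<alpha> < 1" "0 < \<beta>" "\<beta> < 1" using r01 unfolding \<alpha>_def \<beta>_def by auto
    have "strict R (mix \<alpha> x z) y" "strict R y (mix \<beta> x z)"
      unfolding strict_def using rep[OF bet_mix[OF h(1,3)] h(2)] rep[OF h(2) bet_mix[OF h(1,3)]]
        a01 ea eb ey_def by auto
    then show "\<exists>\<alpha> \<beta>. 0 < \<alpha> \<and> \<alpha> < 1 \<and> 0 < \<beta> \<and> \<beta> < 1 \<and>
         strict R (mix \<alpha> x z) y \<and> strict R y (mix \<beta> x z)" using a01 by blast
  qed
  show ?thesis using nt imp cpl trn ind arch by (simp add: objective_EU_def)
qed



locale vnm =
  fixes R :: "'p pref" and Tv Fv :: 'p
  assumes nt: "non_triviality Tv Fv R" and oeu: "objective_EU R"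
begin

abbreviation "T \<equiv> point_bet (Var Tv)"
abbreviation "F \<equiv> point_bet (Var Fv)"
abbreviation "M \<alpha> \<equiv> mix \<alpha> T F"
abbreviation "ind x y \<equiv> R x y \<and> R y x"

lemma cpl: "bet x \<Longrightarrow> bet y \<Longrightarrow> R x y \<or> R y x"
  using oeu by (auto simp: objective_EU_def complete_pref_def)
lemma trn: "bet x \<Longrightarrow> bet y \<Longrightarrow> bet z \<Longrightarrow> R x y \<Longrightarrow> R y z \<Longrightarrow> R x z"
  using oeu unfolding objective_EU_def transitive_pref_def by blast
lemma rfl: "bet x \<Longrightarrow> R x x" using cpl by blast
lemma indep: "bet x \<Longrightarrow> bet y \<Longrightarrow> bet z \<Longrightarrow> 0 < \<alpha> \<Longrightarrow> \<alpha> < 1 \<Longrightarrow>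
   R x y \<longleftrightarrow> R (mix \<alpha> x z) (mix \<alpha> y z)"
  using oeu unfolding objective_EU_def independence_pref_def by blast
lemma indep2: "bet x \<Longrightarrow> bet y \<Longrightarrow> bet z \<Longrightarrow> 0 < \<alpha> \<Longrightarrow> \<alpha> < 1 \<Longrightarrow>
   R x y \<longleftrightarrow> R (mix \<alpha> z x) (mix \<alpha> z y)"
  using indep[of x y z "1 - \<alpha>"] by (simp add: mix_swap[of \<alpha> z])
lemma arch: "bet x \<Longrightarrow> bet y \<Longrightarrow> bet z \<Longrightarrow> strict R x y \<Longrightarrow> strict R y z \<Longrightarrow>
      (\<exists>\<alpha> \<beta>. 0 < \<alpha> \<and> \<alpha> < 1 \<and> 0 < \<beta> \<and> \<beta> < 1 \<and>
         strict R (mix \<alpha> x z) y \<and> strict R y (mix \<beta> x z))"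
  using oeu unfolding objective_EU_def archimedean_pref_def by blast

lemma TF: "strict R T F" using nt by (simp add: non_triviality_def)
lemma Tb: "R T (point_bet a)" and bF: "R (point_bet a) F" using nt by (auto simp: non_triviality_def)

lemma betM: "0 \<le> \<alpha> \<Longrightarrow> \<alpha> \<le> 1 \<Longrightarrow> bet (M \<alpha>)"
  by (simp add: bet_mix bet_point)

lemma M1: "M 1 = T" by (simp add: mix_1)
lemma M0: "M 0 = F" by (simp add: mix_0)

lemma subst1:
  assumes "bet x" "bet y" "bet z" "ind x y" "0 \<le> p" "p \<le> 1"
  shows "ind (mix p x z) (mix p y z)"
proof (cases "p = 0 \<or> p = 1")
  case True then show ?thesis using assms rfl by (auto simp: mix_0 mix_1)
next
  case False then show ?thesis using assms indep[of x y z p] indep[of y x z p] by auto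
qed

lemma subst2:
  assumes "bet x" "bet y" "bet z" "ind x y" "0 \<le> p" "p \<le> 1"
  shows "ind (mix p z x) (mix p z y)"
  using subst1[of x y z "1 - p"] assms by (simp add: mix_swap[of p z])

lemma MF: assumes "0 < \<alpha>" "\<alpha> \<le> 1" shows "strict R (M \<alpha>) F"
proof (cases "\<alpha> = 1")
  case True then show ?thesis using TF by (simp add: mix_1)
next
  case False
  then have "0 < \<alpha>" "\<alpha> < 1" using assms by auto
  then show ?thesis using TF indep[of T F F \<alpha>] indep[of F T F \<alpha>]
    by (simp add: strict_def mix_same bet_point)
qed

lemma M_strict:
  assumes "0 \<le> \<beta>" "\<beta> < \<alpha>" "\<alpha> \<le> 1"
  shows "strict R (M \<alpha>) (M \<beta>)"
proof (cases "\<beta> = 0")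
  case True then show ?thesis using MF assms by (simp add: mix_0)
next
  case False
  define \<gamma> where "\<gamma> = \<beta> / \<alpha>"
  have g: "0 < \<gamma>" "\<gamma> < 1" using assms False unfolding \<gamma>_def by (auto simp: field_simps)
  have eq: "M \<beta> = mix \<gamma> (M \<alpha>) (M 0)" using assms unfolding \<gamma>_def mix_mix by simp
  have eq2: "M \<beta> = mix (1 - \<gamma>) F (M \<alpha>)" using eq by (simp add: mix_0 mix_swap[of \<gamma>])
  have s: "strict R (M \<alpha>) F" using MF assms by auto
  have bM: "bet (M \<alpha>)" using assms by (simp add: betM)
  show ?thesis using s indep[of "M \<alpha>" F "M \<alpha>" "1 - \<gamma>"] indep[of F "M \<alpha>" "M \<alpha>" "1 - \<gamma>"] g bM
    unfolding eq2 strict_def by (simp add: mix_same bet_point)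
qed

lemma M_le:
  assumes "0 \<le> \<alpha>" "\<alpha> \<le> 1" "0 \<le> \<beta>" "\<beta> \<le> 1"
  shows "R (M \<alpha>) (M \<beta>) \<longleftrightarrow> \<beta> \<le> \<alpha>"
proof (cases "\<beta> \<le> \<alpha>")
  case True then show ?thesis
    using M_strict[of \<beta> \<alpha>] assms rfl[OF betM[of \<alpha>]] by (cases "\<beta> = \<alpha>") (auto simp: strict_def)
next
  case False then show ?thesis using M_strict[of \<alpha> \<beta>] assms by (auto simp: strict_def)
qed

lemma M_unique:
  assumes "bet x" "0 \<le> \<alpha>" "\<alpha> \<le> 1" "0 \<le> \<beta>" "\<beta> \<le> 1" "ind x (M \<alpha>)" "ind x (M \<beta>)"
  shows "\<alpha> = \<beta>"
proof -
  have "R (M \<alpha>) (M \<beta>)" "R (M \<beta>) (M \<alpha>)"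
    using assms trn[OF betM betM, of \<alpha> \<beta> x] trn[OF betM assms(1) betM, of \<alpha> \<beta>]
      trn[OF betM assms(1) betM, of \<beta> \<alpha>] by auto
  then show ?thesis using M_le assms by force
qed

lemma exists_M:
  assumes b: "bet b" and hT: "R T b" and hF: "R b F"
  shows "\<exists>\<alpha>. 0 \<le> \<alpha> \<and> \<alpha> \<le> 1 \<and> ind b (M \<alpha>)"
proof (cases "R F b")
  case True then show ?thesis using hF by (intro exI[of _ 0]) (simp add: mix_0)
next
  case nF: False
  show ?thesis
  proof (cases "R b T")
    case True then show ?thesis using hT by (intro exI[of _ 1]) (simp add: mix_1)
  next
    case nT: False
    have sbF: "strict R b F" using nF hF by (simp add: strict_def)
    have sTb: "strict R T b" using nT hT by (simp add: strict_def)
    define S where "S = {\<gamma>. 0 \<le> \<gamma> \<and> \<gamma> \<le> 1 \<and> R b (M \<gamma>)}"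
    define \<alpha> where "\<alpha> = Sup S"
    have S0: "0 \<in> S" using hF unfolding S_def by (simp add: mix_0)
    have Sne: "S \<noteq> {}" using S0 by auto
    have Sbdd: "bdd_above S" unfolding S_def by (auto intro: bdd_aboveI[of _ 1])
    have a0: "0 \<le> \<alpha>" unfolding \<alpha>_def using cSup_upper[OF S0 Sbdd] .
    have a1: "\<alpha> \<le> 1" unfolding \<alpha>_def using Sne by (intro cSup_least) (auto simp: S_def)
    have bMa: "bet (M \<alpha>)" using a0 a1 by (simp add: betM)
    have c1: "\<not> strict R (M \<alpha>) b"
    proof
      assume h: "strict R (M \<alpha>) b"
      have "\<alpha> \<noteq> 0" using h sbF by (auto simp: strict_def mix_0)
      then have apos: "\<alpha> > 0" using a0 by simp
      obtain a' where a': "0 < a'" "a' < 1" "strict R (mix a' (M \<alpha>) F) b"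
        using arch[OF bMa b bet_point h sbF] by blast
      have eqm: "mix a' (M \<alpha>) F = M (a' * \<alpha>)"
      proof -
        have "mix a' (M \<alpha>) F = mix a' (M \<alpha>) (M 0)" by (simp only: mix_0)
        also have "\<dots> = M (a' * \<alpha> + (1 - a') * 0)" by (rule mix_mix)
        finally show ?thesis by simp
      qed
      have "\<gamma> \<le> a' * \<alpha>" if "\<gamma> \<in> S" for \<gamma>
      proof (rule ccontr)
        assume "\<not> \<gamma> \<le> a' * \<alpha>"
        then have "strict R (M \<gamma>) (M (a' * \<alpha>))" using that apos a' a0
          by (intro M_strict) (auto simp: S_def)
        moreover have "R b (M \<gamma>)" using that by (simp add: S_def)
        ultimately have "R b (M (a' * \<alpha>))"
          using trn[OF b betM betM, of \<gamma> "a' * \<alpha>"] that a' a1 a0 apos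
          by (auto simp: S_def strict_def mult_le_one)
        then show False using a' eqm by (simp add: strict_def)
      qed
      then have "\<alpha> \<le> a' * \<alpha>" unfolding \<alpha>_def using Sne by (intro cSup_least) auto
      then show False using apos a' by simp
    qed
    have c2: "\<not> strict R b (M \<alpha>)"
    proof
      assume h: "strict R b (M \<alpha>)"
      have "\<alpha> \<noteq> 1" using h hT by (auto simp: strict_def mix_1)
      then have alt: "\<alpha> < 1" using a1 by simp
      obtain \<beta> where bb: "0 < \<beta>" "\<beta> < 1" "strict R b (mix \<beta> T (M \<alpha>))"
        using arch[OF bet_point b bMa sTb h] by blast
      have eqm: "mix \<beta> T (M \<alpha>) = M (\<beta> + (1 - \<beta>) * \<alpha>)"
      proof -
        have "mix \<beta> T (M \<alpha>) = mix \<beta> (M 1) (M \<alpha>)" by (simp only: mix_1)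
        also have "\<dots> = M (\<beta> * 1 + (1 - \<beta>) * \<alpha>)" by (rule mix_mix)
        finally show ?thesis by simp
      qed
      define \<gamma> where "\<gamma> = \<beta> + (1 - \<beta>) * \<alpha>"
      have "(1 - \<beta>) * \<alpha> \<le> 1 - \<beta>" using bb a1 by (intro mult_left_le) auto
      then have g1: "\<gamma> \<le> 1" unfolding \<gamma>_def by linarith
      have g0: "0 \<le> \<gamma>" unfolding \<gamma>_def using bb a0 by simp
      have "\<gamma> \<in> S" using bb eqm g0 g1 unfolding S_def \<gamma>_def by (simp add: strict_def)
      then have "\<gamma> \<le> \<alpha>" unfolding \<alpha>_def using Sbdd by (rule cSup_upper)
      moreover have "\<gamma> - \<alpha> = \<beta> * (1 - \<alpha>)" unfolding \<gamma>_def by (simp add: algebra_simps)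
      moreover have "\<beta> * (1 - \<alpha>) > 0" using bb alt by simp
      ultimately show False by linarith
    qed
    have "ind b (M \<alpha>)" using c1 c2 cpl[OF b bMa] by (auto simp: strict_def)
    then show ?thesis using a0 a1 by blast
  qed
qed

definition u :: "'p form \<Rightarrow> real" where
  "u a = (SOME \<alpha>. 0 \<le> \<alpha> \<and> \<alpha> \<le> 1 \<and> ind (point_bet a) (M \<alpha>))"

lemma u_prop: "0 \<le> u a \<and> u a \<le> 1 \<and> ind (point_bet a) (M (u a))"
  unfolding u_def by (rule someI_ex) (rule exists_M[OF bet_point Tb bF])

end


context vnm begin

lemma ind_trans: "bet x \<Longrightarrow> bet y \<Longrightarrow> bet z \<Longrightarrow> ind x y \<Longrightarrow> ind y z \<Longrightarrow> ind x z"
  using trn by blast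

lemma main_ind:
  "bet b \<Longrightarrow> card (supp b) = n \<Longrightarrow> 0 \<le> expected u b \<and> expected u b \<le> 1 \<and> ind b (M (expected u b))"
proof (induction n arbitrary: b)
  case 0
  then have "supp b = {}" by (auto simp: bet_def)
  then show ?case using 0 by (simp add: bet_def)
next
  case (Suc n)
  have fin: "finite (supp b)" and s1: "(\<Sum>a\<in>supp b. b a) = 1" and rng: "\<And>c. 0 \<le> b c \<and> b c \<le> 1"
    using Suc.prems by (auto simp: bet_def)
  obtain a where a: "a \<in> supp b" using Suc.prems by (metis card.empty ex_in_conv nat.simps(3))
  define p where "p = b a"
  have ppos: "0 < p" using a rng[of a] unfolding p_def supp_def by (simp add: order_le_less)
  have split: "(\<Sum>c\<in>supp b. b c) = p + (\<Sum>c\<in>supp b - {a}. b c)"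
    unfolding p_def using fin a by (simp add: sum.remove)
  show ?case
  proof (cases "p = 1")
    case True
    then have "(\<Sum>c\<in>supp b - {a}. b c) = 0" using split s1 by simp
    then have "\<forall>c\<in>supp b - {a}. b c = 0" using fin rng by (subst (asm) sum_nonneg_eq_0_iff) auto
    then have "b c = 0" if "c \<noteq> a" for c using that by (auto simp: supp_def)
    then have beq: "b = point_bet a" using True p_def by (auto simp: point_bet_def fun_eq_iff)
    show ?thesis using u_prop[of a] unfolding beq expected_point by simp
  next
    case False
    then have p1: "p < 1" using rng[of a] p_def by simp
    define b' where "b' = (\<lambda>c. if c = a then 0 else b c / (1 - p))"
    have suppb': "supp b' = supp b - {a}" using p1 by (auto simp: supp_def b'_def)
    have beq: "b = mix p (point_bet a) b'"
      using p1 by (auto simp: fun_eq_iff mix_def point_bet_def b'_def p_def)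
    have sb': "(\<Sum>c\<in>supp b'. b' c) = 1"
    proof -
      have "(\<Sum>c\<in>supp b'. b' c) = (\<Sum>c\<in>supp b - {a}. b c / (1 - p))"
        unfolding suppb' by (rule sum.cong) (auto simp: b'_def)
      also have "\<dots> = (\<Sum>c\<in>supp b - {a}. b c) / (1 - p)" by (simp add: sum_divide_distrib)
      also have "\<dots> = 1" using split s1 p1 by simp
      finally show ?thesis .
    qed
    have nn: "0 \<le> b' c" for c using rng[of c] p1 by (simp add: b'_def)
    have finb': "finite (supp b')" using fin suppb' by simp
    have le1: "b' c \<le> 1" for c
    proof (cases "c \<in> supp b'")
      case True
      then show ?thesis using member_le_sum[of c "supp b'" b'] nn finb' sb' by simp
    next
      case False then show ?thesis by (simp add: supp_def)
    qed
    have betb': "bet b'" using nn le1 finb' sb' by (simp add: bet_def)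
    have cb': "card (supp b') = n" using Suc.prems a fin suppb' by simp
    from Suc.IH[OF betb' cb'] have IH: "0 \<le> expected u b'" "expected u b' \<le> 1"
      "ind b' (M (expected u b'))" by auto
    have ua: "0 \<le> u a" "u a \<le> 1" "ind (point_bet a) (M (u a))" using u_prop by auto
    have E: "expected u b = p * u a + (1 - p) * expected u b'"
      unfolding beq by (simp add: expected_mix[OF bet_point betb'] expected_point)
    have E0: "0 \<le> expected u b" unfolding E using ppos p1 ua IH by simp
    have E1: "expected u b \<le> 1" unfolding E using ppos p1 ua IH
      by (intro convex_bound_le) auto
    have i1: "ind (mix p (point_bet a) b') (mix p (M (u a)) b')"
      using subst1[OF bet_point betM betb' ua(3)] ua ppos p1 by auto
    have i2: "ind (mix p (M (u a)) b') (mix p (M (u a)) (M (expected u b')))"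
      using subst2[OF betb' betM betM IH(3)] ua ppos p1 IH by auto
    have meq: "mix p (M (u a)) (M (expected u b')) = M (expected u b)"
      unfolding E mix_mix ..
    have bm1: "bet (mix p (M (u a)) b')" using bet_mix[OF betM betb'] ua ppos p1 by simp
    have "ind b (M (expected u b))"
      using ind_trans[OF _ bm1 _ i1 i2] betM E0 E1 Suc.prems(1)
      unfolding meq beq[symmetric] by simp
    then show ?thesis using E0 E1 by simp
  qed
qed

lemma representation:
  "\<exists>u. (\<forall>a. 0 \<le> u a \<and> u a \<le> 1) \<and> u (Var Tv) = 1 \<and> u (Var Fv) = 0 \<and>
     (\<forall>b b'. bet b \<longrightarrow> bet b' \<longrightarrow> (R b b' \<longleftrightarrow> expected u b' \<le> expected u b))"
proof (intro exI conjI allI impI)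
  fix a show "0 \<le> u a" "u a \<le> 1" using u_prop by auto
next
  show "u (Var Tv) = 1"
    using M_unique[OF bet_point[of "Var Tv"], of "u (Var Tv)" 1] u_prop[of "Var Tv"] rfl[OF bet_point, of "Var Tv"]
    by (simp add: mix_1)
next
  show "u (Var Fv) = 0"
    using M_unique[OF bet_point[of "Var Fv"], of "u (Var Fv)" 0] u_prop[of "Var Fv"] rfl[OF bet_point, of "Var Fv"]
    by (simp add: mix_0)
next
  fix b b' :: "'p form \<Rightarrow> real"
  assume b: "bet b" and b': "bet b'"
  have h: "0 \<le> expected u b" "expected u b \<le> 1" "ind b (M (expected u b))"
    "0 \<le> expected u b'" "expected u b' \<le> 1" "ind b' (M (expected u b'))"
    using main_ind[OF b refl] main_ind[OF b' refl] by auto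
  have bm: "bet (M (expected u b))" "bet (M (expected u b'))" using h betM by auto
  show "R b b' \<longleftrightarrow> expected u b' \<le> expected u b"
  proof
    assume "R b b'"
    then have "R (M (expected u b)) (M (expected u b'))"
      using trn[OF bm(1) b b'] trn[OF bm(1) b' bm(2)] h by blast
    then show "expected u b' \<le> expected u b" using M_le h by blast
  next
    assume "expected u b' \<le> expected u b"
    then have "R (M (expected u b)) (M (expected u b'))" using M_le h by blast
    then show "R b b'"
      using trn[OF b bm(1) bm(2)] trn[OF b bm(2) b'] h by blast
  qed
qed

end


lemma necessity:
  fixes R :: "'p pref"
  assumes "non_triviality Tv Fv R" "objective_EU R" "implication_axiom Tv Fv R"
  shows "\<exists>u. (\<forall>a. 0 \<le> u a \<and> u a \<le> 1) \<and> u (Var Tv) = 1 \<and> u (Var Fv) = 0 \<and>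
     (\<forall>b b'. bet b \<longrightarrow> bet b' \<longrightarrow> (R b b' \<longleftrightarrow> expected u b' \<le> expected u b)) \<and>
     (\<forall>a c. entails Tv Fv a c \<longrightarrow> u a \<le> u c)"
proof -
  interpret vnm R Tv Fv using assms by unfold_locales
  obtain u where u: "\<forall>a. 0 \<le> u a \<and> u a \<le> 1" "u (Var Tv) = 1" "u (Var Fv) = 0"
     "\<forall>b b'. bet b \<longrightarrow> bet b' \<longrightarrow> (R b b' \<longleftrightarrow> expected u b' \<le> expected u b)"
    using representation by blast
  have "\<forall>a c. entails Tv Fv a c \<longrightarrow> u a \<le> u c"
  proof (intro allI impI)
    fix a c assume "entails Tv Fv a c"
    then have "R (point_bet c) (point_bet a)" using assms(3) by (simp add: implication_axiom_def)
    then show "u a \<le> u c" using u(4) bet_point[of a] bet_point[of c] by (simp add: expected_point)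
  qed
  then show ?thesis using u by blast
qed

lemma rep_from_model:
  assumes "represents R t lam"
  shows "\<And>b b'. bet b \<Longrightarrow> bet b' \<Longrightarrow> R b b' \<longleftrightarrow> expected (\<lambda>a. lam (t a)) b' \<le> expected (\<lambda>a. lam (t a)) b"
  using assms by (simp add: represents_def)

lemma model_basic:
  assumes "subjective_model Tv Fv \<Omega> t \<Sigma> lam"
  shows "lam (t (Var Tv)) = 1" "lam (t (Var Fv)) = 0" "\<And>a. 0 \<le> lam (t a) \<and> lam (t a) \<le> 1"
proof -
  show "lam (t (Var Tv)) = 1" "lam (t (Var Fv)) = 0"
    using assms by (auto simp: subjective_model_def truth_valuation_def likelihood_appraisal_def)
  fix a
  have "t a \<in> \<Sigma>" using assms by (auto simp: subjective_model_def)
  then show "0 \<le> lam (t a) \<and> lam (t a) \<le> 1"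
    using assms by (auto simp: subjective_model_def likelihood_appraisal_def)
qed

lemma suff2:
  fixes R :: "'p pref" and t :: "'p form \<Rightarrow> 'w set"
  assumes m: "subjective_model Tv Fv \<Omega> t \<Sigma> lam" and r: "represents R t lam"
    and ad: "additive_la \<Sigma> lam" and mt: "monotone_tv Tv Fv t"
  shows "non_triviality Tv Fv R \<and> objective_EU R \<and> implication_axiom Tv Fv R"
proof (rule suffU[OF rep_from_model[OF r] model_basic[OF m]])
  fix a c assume e: "entails Tv Fv a c"
  have sub: "t a \<subseteq> t c" using mt e by (simp add: monotone_tv_def)
  have alg: "algebra \<Omega> \<Sigma>" and inS: "t a \<in> \<Sigma>" "t c \<in> \<Sigma>"
    and nn: "\<forall>A\<in>\<Sigma>. 0 \<le> lam A"
    using m by (auto simp: subjective_model_def likelihood_appraisal_def)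
  have d: "t c - t a \<in> \<Sigma>" using alg inS by (meson algebra.axioms ring_of_sets.Diff)
  have "lam (t c) = lam (t a \<union> (t c - t a))" using sub by (simp add: Un_absorb1)
  also have "\<dots> = lam (t a) + lam (t c - t a)"
    using ad inS(1) d unfolding additive_la_def by blast
  finally show "lam (t a) \<le> lam (t c)" using nn d by simp
qed

lemma suff3:
  fixes R :: "'p pref" and t :: "'p form \<Rightarrow> 'w set"
  assumes m: "subjective_model Tv Fv \<Omega> t \<Sigma> lam" and r: "represents R t lam"
    and ml: "monotone_la \<Sigma> lam" and st: "sound_tv Tv Fv \<Omega> t"
  shows "non_triviality Tv Fv R \<and> objective_EU R \<and> implication_axiom Tv Fv R"
proof (rule suffU[OF rep_from_model[OF r] model_basic[OF m]])
  fix a c assume e: "entails Tv Fv a c"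
  have sub: "t a \<subseteq> t c" using st e by (simp add: sound_tv_def monotone_tv_def)
  have inS: "t a \<in> \<Sigma>" "t c \<in> \<Sigma>" using m by (auto simp: subjective_model_def)
  show "lam (t a) \<le> lam (t c)" using ml inS sub by (simp add: monotone_la_def)
qed

lemma model2:
  fixes u :: "'p form \<Rightarrow> real"
  assumes rng: "\<forall>a. 0 \<le> u a \<and> u a \<le> 1" and T: "u (Var Tv) = 1" and F: "u (Var Fv) = 0"
    and rep: "\<forall>b b'. bet b \<longrightarrow> bet b' \<longrightarrow> (R b b' \<longleftrightarrow> expected u b' \<le> expected u b)"
    and mono: "\<forall>a c. entails Tv Fv a c \<longrightarrow> u a \<le> u c"
  shows "\<exists>(\<Omega>::real set) t \<Sigma> lam. subjective_model Tv Fv \<Omega> t \<Sigma> lam \<and> represents R t lam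
              \<and> additive_la \<Sigma> lam \<and> monotone_tv Tv Fv t"
proof -
  define \<Omega> :: "real set" where "\<Omega> = {0..<1}"
  define t where "t a = {0..<u a}" for a
  define \<Sigma> where "\<Sigma> = sets (restrict_space lborel \<Omega>)"
  define lam where "lam A = measure lborel A" for A :: "real set"
  have S: "A \<in> \<Sigma> \<longleftrightarrow> A \<subseteq> \<Omega> \<and> A \<in> sets lborel" for A
    unfolding \<Sigma>_def by (rule sets_restrict_space_iff) (simp add: \<Omega>_def)
  have alg: "algebra \<Omega> \<Sigma>"
    using sets.sigma_algebra_axioms[of "restrict_space lborel \<Omega>"] sigma_algebra.axioms(1)
    unfolding \<Sigma>_def by (force simp: space_restrict_space)
  have fm: "A \<in> \<Sigma> \<Longrightarrow> emeasure lborel A \<noteq> \<infinity>" for A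
  proof -
    assume "A \<in> \<Sigma>"
    then have "emeasure lborel A \<le> emeasure lborel {0..<(1::real)}" using S
      by (intro emeasure_mono) (auto simp: \<Omega>_def)
    then show ?thesis by (auto simp: top_unique)
  qed
  have lamrng: "\<forall>A\<in>\<Sigma>. 0 \<le> lam A \<and> lam A \<le> 1"
  proof
    fix A assume A: "A \<in> \<Sigma>"
    have "lam A \<le> measure lborel \<Omega>" unfolding lam_def using A S
      by (intro measure_mono_fmeasurable) (auto simp: \<Omega>_def fmeasurable_def)
    then show "0 \<le> lam A \<and> lam A \<le> 1" by (simp add: \<Omega>_def lam_def)
  qed
  have tv: "truth_valuation Tv Fv \<Omega> t"
    using rng T F by (auto simp: truth_valuation_def t_def \<Omega>_def)
  have la: "likelihood_appraisal \<Omega> \<Sigma> lam"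
    using alg lamrng by (simp add: likelihood_appraisal_def lam_def \<Omega>_def)
  have rt: "range t \<subseteq> \<Sigma>" using rng S by (auto simp: t_def \<Omega>_def)
  have lt: "(\<lambda>a. lam (t a)) = u" using rng by (simp add: fun_eq_iff lam_def t_def)
  have r: "represents R t lam" using rep unfolding represents_def lt by blast
  have ad: "additive_la \<Sigma> lam" unfolding additive_la_def lam_def
    using fm S by (auto intro!: measure_Union)
  have mt: "monotone_tv Tv Fv t" using mono by (auto simp: monotone_tv_def t_def)
  show ?thesis using tv la rt r ad mt unfolding subjective_model_def by blast
qed

lemma model3:
  fixes u :: "'p form \<Rightarrow> real"
  assumes rng: "\<forall>a. 0 \<le> u a \<and> u a \<le> 1" and T: "u (Var Tv) = 1" and F: "u (Var Fv) = 0"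
    and rep: "\<forall>b b'. bet b \<longrightarrow> bet b' \<longrightarrow> (R b b' \<longleftrightarrow> expected u b' \<le> expected u b)"
    and mono: "\<forall>a c. entails Tv Fv a c \<longrightarrow> u a \<le> u c"
  shows "\<exists>(\<Omega>::('p \<Rightarrow> bool) set) t \<Sigma> lam. subjective_model Tv Fv \<Omega> t \<Sigma> lam \<and> represents R t lam
              \<and> monotone_la \<Sigma> lam \<and> sound_tv Tv Fv \<Omega> t"
proof -
  define \<Omega> :: "('p \<Rightarrow> bool) set" where "\<Omega> = {v. v Tv \<and> \<not> v Fv}"
  define t where "t a = {v\<in>\<Omega>. eval v a}" for a
  define lam where "lam A = Sup {u a | a. t a \<subseteq> A}" for A
  have ent: "t c \<subseteq> t a \<Longrightarrow> entails Tv Fv c a" for a c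
    unfolding entails_def t_def \<Omega>_def by blast
  have tF: "t (Var Fv) = {}" and tT: "t (Var Tv) = \<Omega>" by (auto simp: t_def \<Omega>_def)
  have ne: "{u a | a. t a \<subseteq> A} \<noteq> {}" for A using tF by blast
  have bdd: "bdd_above {u a | a. t a \<subseteq> A}" for A using rng by (auto intro: bdd_aboveI[of _ 1])
  have lt: "lam (t a) = u a" for a
    unfolding lam_def using mono ent by (intro cSup_eq_maximum) auto
  have ml: "lam A \<le> lam B" if "A \<subseteq> B" for A B
    unfolding lam_def by (rule cSup_subset_mono[OF ne bdd]) (use that in blast)
  have lam0: "lam {} = 0" using lt[of "Var Fv"] tF F by simp
  have lam1: "lam \<Omega> = 1" using lt[of "Var Tv"] tT T by simp
  have lamrng: "\<forall>A\<in>Pow \<Omega>. 0 \<le> lam A \<and> lam A \<le> 1"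
    using ml[of "{}"] ml[of _ \<Omega>] lam0 lam1 by auto
  have alg: "algebra \<Omega> (Pow \<Omega>)" using sigma_algebra_Pow sigma_algebra.axioms(1) by blast
  have tv: "truth_valuation Tv Fv \<Omega> t" using tF tT by (auto simp: truth_valuation_def t_def)
  have la: "likelihood_appraisal \<Omega> (Pow \<Omega>) lam"
    using alg lamrng lam0 lam1 by (simp add: likelihood_appraisal_def)
  have rt: "range t \<subseteq> Pow \<Omega>" by (auto simp: t_def)
  have lt': "(\<lambda>a. lam (t a)) = u" using lt by (simp add: fun_eq_iff)
  have r: "represents R t lam" using rep unfolding represents_def lt' by blast
  have mla: "monotone_la (Pow \<Omega>) lam" using ml by (simp add: monotone_la_def)
  have st: "sound_tv Tv Fv \<Omega> t"
    unfolding sound_tv_def exact_tv_def monotone_tv_def symmetric_tv_def conj_distributive_tv_def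
      equiv_form_def
    by (auto simp: t_def \<Omega>_def entails_def)
  show ?thesis using tv la rt r mla st unfolding subjective_model_def by blast
qed

theorem proposition3:
  fixes R :: "'p pref" and Tv Fv :: 'p
  shows
   "(non_triviality Tv Fv R \<and> objective_EU R \<and> implication_axiom Tv Fv R
       \<longleftrightarrow> (\<exists>(\<Omega>::real set) t \<Sigma> lam. subjective_model Tv Fv \<Omega> t \<Sigma> lam \<and> represents R t lam
              \<and> additive_la \<Sigma> lam \<and> monotone_tv Tv Fv t))
  \<and> (non_triviality Tv Fv R \<and> objective_EU R \<and> implication_axiom Tv Fv R
       \<longleftrightarrow> (\<exists>(\<Omega>::('p \<Rightarrow> bool) set) t \<Sigma> lam. subjective_model Tv Fv \<Omega> t \<Sigma> lam \<and> represents R t lam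
              \<and> monotone_la \<Sigma> lam \<and> sound_tv Tv Fv \<Omega> t))
  \<and> ((\<exists>(\<Omega>::'w set) t \<Sigma> lam. subjective_model Tv Fv \<Omega> t \<Sigma> lam \<and> represents R t lam
              \<and> additive_la \<Sigma> lam \<and> monotone_tv Tv Fv t)
       \<longrightarrow> non_triviality Tv Fv R \<and> objective_EU R \<and> implication_axiom Tv Fv R)
  \<and> ((\<exists>(\<Omega>::'v set) t \<Sigma> lam. subjective_model Tv Fv \<Omega> t \<Sigma> lam \<and> represents R t lam
              \<and> monotone_la \<Sigma> lam \<and> sound_tv Tv Fv \<Omega> t)
       \<longrightarrow> non_triviality Tv Fv R \<and> objective_EU R \<and> implication_axiom Tv Fv R)"
proof -
  have N: "\<exists>u. (\<forall>a. 0 \<le> u a \<and> u a \<le> 1) \<and> u (Var Tv) = 1 \<and> u (Var Fv) = 0 \<and>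
     (\<forall>b b'. bet b \<longrightarrow> bet b' \<longrightarrow> (R b b' \<longleftrightarrow> expected u b' \<le> expected u b)) \<and>
     (\<forall>a c. entails Tv Fv a c \<longrightarrow> u a \<le> u c)"
    if "non_triviality Tv Fv R \<and> objective_EU R \<and> implication_axiom Tv Fv R"
    using necessity[of Tv Fv R] that by blast
  have c1: "non_triviality Tv Fv R \<and> objective_EU R \<and> implication_axiom Tv Fv R
       \<longleftrightarrow> (\<exists>(\<Omega>::real set) t \<Sigma> lam. subjective_model Tv Fv \<Omega> t \<Sigma> lam \<and> represents R t lam
              \<and> additive_la \<Sigma> lam \<and> monotone_tv Tv Fv t)"
    using N model2[of _ Tv Fv R] suff2[of Tv Fv _ _ _ _ R] by blast
  have c2: "non_triviality Tv Fv R \<and> objective_EU R \<and> implication_axiom Tv Fv R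
       \<longleftrightarrow> (\<exists>(\<Omega>::('p \<Rightarrow> bool) set) t \<Sigma> lam. subjective_model Tv Fv \<Omega> t \<Sigma> lam \<and> represents R t lam
              \<and> monotone_la \<Sigma> lam \<and> sound_tv Tv Fv \<Omega> t)"
    using N model3[of _ Tv Fv R] suff3[of Tv Fv _ _ _ _ R] by blast
  have c3: "(\<exists>(\<Omega>::'w set) t \<Sigma> lam. subjective_model Tv Fv \<Omega> t \<Sigma> lam \<and> represents R t lam
              \<and> additive_la \<Sigma> lam \<and> monotone_tv Tv Fv t)
       \<longrightarrow> non_triviality Tv Fv R \<and> objective_EU R \<and> implication_axiom Tv Fv R"
    using suff2[of Tv Fv _ _ _ _ R] by blast
  have c4: "(\<exists>(\<Omega>::'v set) t \<Sigma> lam. subjective_model Tv Fv \<Omega> t \<Sigma> lam \<and> represents R t lam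
              \<and> monotone_la \<Sigma> lam \<and> sound_tv Tv Fv \<Omega> t)
       \<longrightarrow> non_triviality Tv Fv R \<and> objective_EU R \<and> implication_axiom Tv Fv R"
    using suff3[of Tv Fv _ _ _ _ R] by blast
  show ?thesis using c1 c2 c3 c4 by blast
qed

end
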